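(* Let $k\ge 1$ and let $r_1,\ldots,r_k$ be $k$ travel requests whose arrivals follow independent Poisson processes with rates $\alpha_1,\ldots,\alpha_k>0$, respectively. Let $\bar t>0$. Then the probability that all $k$ requests have an occurrence within a time interval of length at most $\bar t$, i.e. the probability that $\max\{E_1,\ldots,E_k\}-\min\{E_1,\ldots,E_k\}\le \bar t$ where $E_i\sim\mathrm{Exp}(\alpha_i)$ are the independent times until the first occurrence of request $r_i$, equals $$P_{\bar{t}}(\alpha_{1}, \ldots, \alpha_{k})=\sum_{i=1}^{k} \frac{\alpha_{i}}{\sum_{j=1}^{k} \alpha_{j}} \prod_{\substack{j=1\\ j\neq i}}^{k}\left(1-e^{-\alpha_{j} \bar{t}}\right).$$
   Context: The time until the first occurrence of a Poisson process with rate $\alpha$ is exponentially distributed with parameter $\alpha$. *)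

theory Defs
  imports "HOL-Probability.Probability"
begin

end

theory Submission
  imports Defs
begin

lemma exp_cdf:
  assumes "0 < l" "0 \<le> b"
  shows "measure (density lborel (exponential_density l)) {..b} = 1 - exp (- l * b)"
proof -
  interpret P: prob_space "density lborel (exponential_density l)"
    using prob_space_exponential_density[OF assms(1)] .
  have "emeasure (density lborel (exponential_density l)) {..b} = ennreal (1 - exp (- l * b))"
    using emeasure_erlang_density[OF assms(1), of 0 b] assms by (simp add: erlang_CDF_0)
  moreover have "0 \<le> 1 - exp (- l * b)" using assms by (simp add: mult_nonneg_nonneg)
  ultimately show ?thesis using P.emeasure_eq_measure
    by (metis ennreal_inj measure_nonneg)
qed

lemma exp_interval:
  assumes "0 < l" "0 \<le> a" "0 \<le> t"
  shows "emeasure (density lborel (exponential_density l)) {a<..a+t} = ennreal (exp (- l * a) * (1 - exp (- l * t)))"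
    and "emeasure (density lborel (exponential_density l)) {a..a+t} = ennreal (exp (- l * a) * (1 - exp (- l * t)))"
proof -
  let ?D = "density lborel (exponential_density l)"
  interpret P: prob_space ?D
    using prob_space_exponential_density[OF assms(1)] .
  have u: "{..a} \<union> {a<..a+t} = {..a+t}" using assms by auto
  have "measure ?D {..a+t} = measure ?D {..a} + measure ?D {a<..a+t}"
    unfolding u[symmetric] by (rule P.finite_measure_Union) auto
  then have m1: "measure ?D {a<..a+t} = exp (- l * a) * (1 - exp (- l * t))"
    using exp_cdf[OF assms(1), of a] exp_cdf[OF assms(1), of "a+t"] assms
    by (simp add: algebra_simps exp_add[symmetric] exp_diff)
  show 1: "emeasure ?D {a<..a+t} = ennreal (exp (- l * a) * (1 - exp (- l * t)))"
    using m1 P.emeasure_eq_measure by simp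
  have "emeasure ?D {a} = (\<integral>\<^sup>+ x. ennreal (exponential_density l x) * indicator {a} x \<partial>lborel)"
    by (rule emeasure_density) auto
  also have "\<dots> = (\<integral>\<^sup>+ x. ennreal (exponential_density l a) * indicator {a} x \<partial>lborel)"
    by (intro nn_integral_cong) (auto split: split_indicator)
  also have "\<dots> = 0" by (simp add: nn_integral_cmult_indicator)
  finally have z: "emeasure ?D {a} = 0" .
  have u2: "{a..a+t} = {a} \<union> {a<..a+t}" using assms by auto
  have "emeasure ?D {a..a+t} = emeasure ?D {a} + emeasure ?D {a<..a+t}"
    unfolding u2 by (rule plus_emeasure[symmetric]) auto
  then show "emeasure ?D {a..a+t} = ennreal (exp (- l * a) * (1 - exp (- l * t)))"
    using z 1 by simp
qed

lemma blockm:
  fixes \<beta> :: "nat \<Rightarrow> real" and I :: "nat set" and t :: real and i :: nat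
  assumes fin: "finite I" and iI: "i \<in> I"
  defines "D \<equiv> \<lambda>j. density lborel (exponential_density (\<beta> j))"
  shows "{x \<in> space (PiM I D). \<forall>j\<in>I. x i \<le> x j \<and> x j \<le> x i + t \<and> (j < i \<longrightarrow> x i < x j)} \<in> sets (PiM I D)"
proof -
  have sD[simp]: "\<And>j. sets (D j) = sets borel" by (simp add: D_def)
  define B where "B = {x \<in> space (PiM I D). \<forall>j\<in>I. x i \<le> x j \<and> x j \<le> x i + t \<and> (j < i \<longrightarrow> x i < x j)}"
  have comp: "\<And>j. j \<in> I \<Longrightarrow> (\<lambda>x. x j) \<in> borel_measurable (PiM I D)"
  proof -
    fix j assume "j \<in> I"
    then have "(\<lambda>x. x j) \<in> measurable (PiM I D) (D j)" by (rule measurable_component_singleton)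
    then show "(\<lambda>x. x j) \<in> borel_measurable (PiM I D)"
      using measurable_cong_sets[OF refl sD[of j], of "PiM I D"] by blast
  qed
  have Bm[measurable]: "B \<in> sets (PiM I D)"
    unfolding B_def
  proof (rule sets.sets_Collect_finite_All[OF _ fin])
    fix j assume j: "j \<in> I"
    have fj: "(\<lambda>x. x j) \<in> borel_measurable (PiM I D)" and fi: "(\<lambda>x. x i) \<in> borel_measurable (PiM I D)"
      using comp j iI by auto
    have fit: "(\<lambda>x. x i + t) \<in> borel_measurable (PiM I D)"
      using fi by (intro borel_measurable_add) auto
    have s1: "{x \<in> space (PiM I D). x i \<le> x j} \<in> sets (PiM I D)"
      by (rule borel_measurable_le[OF fi fj])
    have s2: "{x \<in> space (PiM I D). x j \<le> x i + t} \<in> sets (PiM I D)"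
      by (rule borel_measurable_le[OF fj fit])
    have s3: "{x \<in> space (PiM I D). x i < x j} \<in> sets (PiM I D)"
      by (rule borel_measurable_less[OF fi fj])
    have eq: "{x \<in> space (PiM I D). x i \<le> x j \<and> x j \<le> x i + t \<and> (j < i \<longrightarrow> x i < x j)}
      = {x \<in> space (PiM I D). x i \<le> x j} \<inter> {x \<in> space (PiM I D). x j \<le> x i + t} \<inter>
        (if j < i then {x \<in> space (PiM I D). x i < x j} else space (PiM I D))"
      by auto
    show "{x \<in> space (PiM I D). x i \<le> x j \<and> x j \<le> x i + t \<and> (j < i \<longrightarrow> x i < x j)} \<in> sets (PiM I D)"
      unfolding eq using s1 s2 s3 by auto
  qed
  then show ?thesis by (simp add: B_def)
qed

lemma block:
  fixes \<beta> :: "nat \<Rightarrow> real" and I :: "nat set" and t :: real and i :: nat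
  assumes fin: "finite I" and iI: "i \<in> I" and pos: "\<And>j. \<beta> j > 0" and t: "t > 0"
  defines "D \<equiv> \<lambda>j. density lborel (exponential_density (\<beta> j))"
  shows "emeasure (PiM I D) {x \<in> space (PiM I D). \<forall>j\<in>I. x i \<le> x j \<and> x j \<le> x i + t \<and> (j < i \<longrightarrow> x i < x j)}
     = ennreal (\<beta> i / (\<Sum>j\<in>I. \<beta> j) * (\<Prod>j\<in>I-{i}. 1 - exp (- \<beta> j * t)))"
proof -
  have ps: "\<And>j. prob_space (D j)" unfolding D_def using pos prob_space_exponential_density by blast
  interpret product_sigma_finite D
    by (intro product_sigma_finite.intro) (simp add: ps prob_space_imp_sigma_finite)
  have sD[simp]: "\<And>j. sets (D j) = sets borel" by (simp add: D_def)
  have spD[simp]: "\<And>j. space (D j) = UNIV" by (simp add: D_def)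
  define J where "J = I - {i}"
  have IJ: "I = insert i J" "i \<notin> J" "finite J" using iI fin by (auto simp: J_def)
  define B where "B = {x \<in> space (PiM I D). \<forall>j\<in>I. x i \<le> x j \<and> x j \<le> x i + t \<and> (j < i \<longrightarrow> x i < x j)}"
  have Bm[measurable]: "B \<in> sets (PiM I D)" unfolding B_def D_def by (rule blockm[OF fin iI])
  define S where "S = (\<lambda>y j. if j < i then {y<..y+t} else {y..y+t::real})"
  have Sm: "\<And>y j. S y j \<in> sets (D j)" by (simp add: S_def)
  define P where "P = (\<Prod>j\<in>J. 1 - exp (- \<beta> j * t))"
  define c where "c = (\<Sum>j\<in>J. \<beta> j)"
  have Ssum: "(\<Sum>j\<in>I. \<beta> j) = \<beta> i + c" unfolding c_def IJ(1) using IJ by simp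
  have Spos: "\<beta> i + c > 0" proof -
    have "c \<ge> 0" unfolding c_def using pos by (intro sum_nonneg) (simp add: less_imp_le)
    then show ?thesis using pos[of i] by linarith
  qed
  have P0: "P \<ge> 0" unfolding P_def using pos t by (intro prod_nonneg) (auto simp: mult_pos_pos less_imp_le)
  have "emeasure (PiM I D) B = (\<integral>\<^sup>+ x. indicator B x \<partial>PiM (insert i J) D)"
    by (simp only: IJ(1)[symmetric] nn_integral_indicator[OF Bm])
  also have "\<dots> = (\<integral>\<^sup>+ y. (\<integral>\<^sup>+ x. indicator B (x(i := y)) \<partial>PiM J D) \<partial>D i)"
    using IJ by (intro product_nn_integral_insert_rev) (auto simp flip: IJ(1))
  also have "\<dots> = (\<integral>\<^sup>+ y. emeasure (PiM J D) (PiE J (S y)) \<partial>D i)"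
  proof (intro nn_integral_cong)
    fix y assume "y \<in> space (D i)"
    have "(\<integral>\<^sup>+ x. indicator B (x(i := y)) \<partial>PiM J D) = (\<integral>\<^sup>+ x. indicator (PiE J (S y)) x \<partial>PiM J D)"
    proof (intro nn_integral_cong)
      fix x assume x: "x \<in> space (PiM J D)"
      have "x(i := y) \<in> B \<longleftrightarrow> x \<in> PiE J (S y)"
        using x t IJ unfolding B_def S_def
        by (auto simp: space_PiM PiE_def Pi_def extensional_def split: if_splits)
      then show "indicator B (x(i := y)) = (indicator (PiE J (S y)) x :: ennreal)"
        by (simp split: split_indicator)
    qed
    also have "\<dots> = emeasure (PiM J D) (PiE J (S y))"
      using Sm by (intro nn_integral_indicator) (simp add: sets_PiM_I_finite IJ)
    finally show "(\<integral>\<^sup>+ x. indicator B (x(i := y)) \<partial>PiM J D) = emeasure (PiM J D) (PiE J (S y))" .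
  qed
  also have "\<dots> = (\<integral>\<^sup>+ y. (\<Prod>j\<in>J. emeasure (D j) (S y j)) \<partial>D i)"
    using IJ Sm by (intro nn_integral_cong emeasure_PiM) auto
  also have "\<dots> = (\<integral>\<^sup>+ y. ennreal (exp (- c * y) * P) \<partial>D i)"
  proof (rule nn_integral_cong_AE)
    have "AE y in D i. 0 \<le> y"
      unfolding D_def by (subst AE_density) (auto simp: exponential_density_def intro!: AE_I2)
    then show "AE y in D i. (\<Prod>j\<in>J. emeasure (D j) (S y j)) = ennreal (exp (- c * y) * P)"
    proof (rule AE_mp, intro AE_I2 impI)
      fix y :: real assume y: "0 \<le> y"
      have "(\<Prod>j\<in>J. emeasure (D j) (S y j)) = (\<Prod>j\<in>J. ennreal (exp (- \<beta> j * y) * (1 - exp (- \<beta> j * t))))"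
        using exp_interval[OF pos y less_imp_le[OF t]] by (intro prod.cong) (auto simp: S_def D_def)
      also have "\<dots> = ennreal (\<Prod>j\<in>J. exp (- \<beta> j * y) * (1 - exp (- \<beta> j * t)))"
        using pos t y by (intro prod_ennreal) (auto simp: mult_pos_pos less_imp_le)
      also have "(\<Prod>j\<in>J. exp (- \<beta> j * y) * (1 - exp (- \<beta> j * t))) = exp (- c * y) * P"
      proof -
        have "(\<Prod>j\<in>J. exp (- (\<beta> j * y))) = exp (- (\<Sum>n\<in>J. \<beta> n * y))"
          using IJ(3) by (subst sum_negf[symmetric], subst exp_sum) simp_all
        then show ?thesis
          unfolding P_def c_def prod.distrib by (simp add: sum_distrib_right)
      qed
      finally show "(\<Prod>j\<in>J. emeasure (D j) (S y j)) = ennreal (exp (- c * y) * P)" .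
    qed
  qed
  also have "\<dots> = (\<integral>\<^sup>+ y. ennreal (exponential_density (\<beta> i) y) * ennreal (exp (- c * y) * P) \<partial>lborel)"
    unfolding D_def by (subst nn_integral_density) auto
  also have "\<dots> = (\<integral>\<^sup>+ y. ennreal (\<beta> i / (\<beta> i + c) * P) * ennreal (exponential_density (\<beta> i + c) y) \<partial>lborel)"
  proof (intro nn_integral_cong)
    fix y :: real
    show "ennreal (exponential_density (\<beta> i) y) * ennreal (exp (- c * y) * P) =
          ennreal (\<beta> i / (\<beta> i + c) * P) * ennreal (exponential_density (\<beta> i + c) y)"
    proof (cases "y < 0")
      case True then show ?thesis by (simp add: exponential_density_def)
    next
      case False
      then have y: "0 \<le> y" by simp
      have "\<beta> i * exp (- y * \<beta> i) * (exp (- c * y) * P) = \<beta> i / (\<beta> i + c) * P * ((\<beta> i + c) * exp (- y * (\<beta> i + c)))"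
        using Spos by (simp add: field_simps exp_add[symmetric])
      then show ?thesis using y pos[of i] Spos P0
        by (simp add: exponential_density_def ennreal_mult[symmetric] less_imp_le)
    qed
  qed
  also have "\<dots> = ennreal (\<beta> i / (\<beta> i + c) * P) * (\<integral>\<^sup>+ y. ennreal (exponential_density (\<beta> i + c) y) \<partial>lborel)"
    by (intro nn_integral_cmult) auto
  also have "(\<integral>\<^sup>+ y. ennreal (exponential_density (\<beta> i + c) y) \<partial>lborel) = 1"
  proof -
    interpret Q: prob_space "density lborel (exponential_density (\<beta> i + c))"
      using prob_space_exponential_density[OF Spos] .
    show ?thesis using Q.emeasure_space_1 by (simp add: emeasure_density)
  qed
  finally show ?thesis unfolding B_def Ssum P_def J_def by simp
qed

lemma main_PM:
  fixes \<beta> :: "nat \<Rightarrow> real" and I :: "nat set" and t :: real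
  assumes fin: "finite I" and ne: "I \<noteq> {}" and pos: "\<And>j. \<beta> j > 0" and t: "t > 0"
  defines "D \<equiv> \<lambda>j. density lborel (exponential_density (\<beta> j))"
  shows "{x \<in> space (PiM I D). Max ((\<lambda>i. x i) ` I) - Min ((\<lambda>i. x i) ` I) \<le> t} \<in> sets (PiM I D)"
    and "emeasure (PiM I D) {x \<in> space (PiM I D). Max ((\<lambda>i. x i) ` I) - Min ((\<lambda>i. x i) ` I) \<le> t}
     = ennreal (\<Sum>i\<in>I. \<beta> i / (\<Sum>j\<in>I. \<beta> j) * (\<Prod>j\<in>I-{i}. 1 - exp (- \<beta> j * t)))"
proof -
  define B where "B = (\<lambda>i. {x \<in> space (PiM I D). \<forall>j\<in>I. x i \<le> x j \<and> x j \<le> x i + t \<and> (j < i \<longrightarrow> x i < x j)})"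
  define A where "A = {x \<in> space (PiM I D). Max ((\<lambda>i. x i) ` I) - Min ((\<lambda>i. x i) ` I) \<le> t}"
  have Bm: "\<And>i. i \<in> I \<Longrightarrow> B i \<in> sets (PiM I D)"
    unfolding B_def D_def by (rule blockm[OF fin])
  have AB: "A = (\<Union>i\<in>I. B i)"
  proof (intro equalityI subsetI)
    fix x assume xA: "x \<in> A"
    define m where "m = Min ((\<lambda>i. x i) ` I)"
    have "m \<in> (\<lambda>i. x i) ` I" unfolding m_def using fin ne by (intro Min_in) auto
    then have ex: "\<exists>i. i \<in> I \<and> x i = m" by auto
    define i0 where "i0 = (LEAST i. i \<in> I \<and> x i = m)"
    have i0: "i0 \<in> I \<and> x i0 = m" unfolding i0_def by (rule LeastI_ex[OF ex])
    have lt: "\<And>j. j < i0 \<Longrightarrow> \<not> (j \<in> I \<and> x j = m)" unfolding i0_def by (rule not_less_Least)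
    have mle: "\<And>j. j \<in> I \<Longrightarrow> m \<le> x j" unfolding m_def using fin by (intro Min_le) auto
    have lemax: "\<And>j. j \<in> I \<Longrightarrow> x j \<le> Max ((\<lambda>i. x i) ` I)" using fin by (intro Max_ge) auto
    have "Max ((\<lambda>i. x i) ` I) \<le> m + t" using xA unfolding A_def m_def by auto
    then have "x \<in> B i0" using xA i0 mle lemax lt unfolding B_def A_def
      by (force simp: order.strict_iff_order)
    then show "x \<in> (\<Union>i\<in>I. B i)" using i0 by auto
  next
    fix x assume "x \<in> (\<Union>i\<in>I. B i)"
    then obtain i where i: "i \<in> I" "x \<in> B i" by auto
    have "Max ((\<lambda>i. x i) ` I) \<le> x i + t" using i fin ne unfolding B_def by (subst Max_le_iff) auto
    moreover have "x i \<le> Min ((\<lambda>i. x i) ` I)" using i fin ne unfolding B_def by (subst Min_ge_iff) auto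
    ultimately show "x \<in> A" using i unfolding A_def B_def by auto
  qed
  have disj: "disjoint_family_on B I"
    unfolding disjoint_family_on_def
  proof (intro ballI impI)
    fix i i' assume ii: "i \<in> I" "i' \<in> I" "i \<noteq> i'"
    show "B i \<inter> B i' = {}"
    proof (cases "i < i'")
      case True
      then show ?thesis using ii unfolding B_def by fastforce
    next
      case False
      then have "i' < i" using ii by simp
      then show ?thesis using ii unfolding B_def by fastforce
    qed
  qed
  have Am: "A \<in> sets (PiM I D)"
    unfolding AB using Bm fin by auto
  from Am show "{x \<in> space (PiM I D). Max ((\<lambda>i. x i) ` I) - Min ((\<lambda>i. x i) ` I) \<le> t} \<in> sets (PiM I D)"
    unfolding A_def .
  have "emeasure (PiM I D) A = (\<Sum>i\<in>I. emeasure (PiM I D) (B i))"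
    unfolding AB using Bm disj fin by (intro sum_emeasure[symmetric]) auto
  also have "\<dots> = (\<Sum>i\<in>I. ennreal (\<beta> i / (\<Sum>j\<in>I. \<beta> j) * (\<Prod>j\<in>I-{i}. 1 - exp (- \<beta> j * t))))"
    unfolding B_def D_def using fin pos t by (intro sum.cong refl block) auto
  also have "\<dots> = ennreal (\<Sum>i\<in>I. \<beta> i / (\<Sum>j\<in>I. \<beta> j) * (\<Prod>j\<in>I-{i}. 1 - exp (- \<beta> j * t)))"
    using pos t by (intro sum_ennreal mult_nonneg_nonneg divide_nonneg_nonneg sum_nonneg prod_nonneg)
      (auto simp: less_imp_le mult_pos_pos)
  finally show "emeasure (PiM I D) {x \<in> space (PiM I D). Max ((\<lambda>i. x i) ` I) - Min ((\<lambda>i. x i) ` I) \<le> t}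
     = ennreal (\<Sum>i\<in>I. \<beta> i / (\<Sum>j\<in>I. \<beta> j) * (\<Prod>j\<in>I-{i}. 1 - exp (- \<beta> j * t)))"
    unfolding A_def .
qed

theorem lemma1:
  fixes M :: "'a measure" and k :: nat and \<alpha> :: "nat \<Rightarrow> real"
    and E :: "nat \<Rightarrow> 'a \<Rightarrow> real" and tbar :: real
  assumes "prob_space M"
    and "k \<ge> 1"
    and "\<And>i. i \<in> {1..k} \<Longrightarrow> \<alpha> i > 0"
    and "tbar > 0"
    and "prob_space.indep_vars M (\<lambda>_. borel) E {1..k}"
    and "\<And>i. i \<in> {1..k} \<Longrightarrow> distributed M lborel (E i) (exponential_density (\<alpha> i))"
  shows "measure M {\<omega> \<in> space M.
            Max ((\<lambda>i. E i \<omega>) ` {1..k}) - Min ((\<lambda>i. E i \<omega>) ` {1..k}) \<le> tbar}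
         = (\<Sum>i=1..k. \<alpha> i / (\<Sum>j=1..k. \<alpha> j) *
              (\<Prod>j\<in>{1..k} - {i}. 1 - exp (- \<alpha> j * tbar)))"
proof -
  interpret prob_space M by (rule assms(1))
  define I where "I = {1..k}"
  have fin: "finite I" and ne: "I \<noteq> {}" using assms(2) by (auto simp: I_def)
  define \<beta> where "\<beta> = (\<lambda>j. if j \<in> I then \<alpha> j else 1)"
  have pos: "\<And>j. \<beta> j > 0" using assms(3) by (simp add: \<beta>_def I_def)
  define D where "D = (\<lambda>j. density lborel (exponential_density (\<beta> j)))"
  define Y where "Y = (\<lambda>\<omega>. \<lambda>j\<in>I. E j \<omega>)"
  have rv: "\<And>i. i \<in> I \<Longrightarrow> random_variable borel (E i)"
  proof -
    fix i assume "i \<in> I"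
    then have "distributed M lborel (E i) (exponential_density (\<alpha> i))" using assms(6) by (simp add: I_def)
    then have "E i \<in> measurable M lborel" by (rule distributed_measurable)
    then show "random_variable borel (E i)" by simp
  qed
  have "distr M (PiM I (\<lambda>_. borel)) Y = PiM I (\<lambda>i. distr M borel (E i))"
    unfolding Y_def using indep_vars_iff_distr_eq_PiM'[OF ne rv] assms(5) by (simp add: I_def)
  also have "\<dots> = PiM I D"
  proof (rule PiM_cong[OF refl])
    fix i assume i: "i \<in> I"
    have "distr M borel (E i) = distr M lborel (E i)" by (rule distr_cong) auto
    also have "\<dots> = density lborel (exponential_density (\<alpha> i))"
      using assms(6) i unfolding I_def by (simp add: distributed_distr_eq_density)
    finally show "distr M borel (E i) = D i" using i by (simp add: D_def \<beta>_def)
  qed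
  finally have deq: "distr M (PiM I (\<lambda>_. borel)) Y = PiM I D" .
  define A where "A = {x \<in> space (PiM I D). Max ((\<lambda>i. x i) ` I) - Min ((\<lambda>i. x i) ` I) \<le> tbar}"
  have Am: "A \<in> sets (PiM I D)" unfolding A_def D_def using main_PM(1)[OF fin ne pos assms(4)] by simp
  have Ym: "Y \<in> measurable M (PiM I (\<lambda>_. borel))" unfolding Y_def using rv
    by (intro measurable_restrict) auto
  have Am': "A \<in> sets (PiM I (\<lambda>_. borel))"
    using Am deq[symmetric] by (metis sets_distr)
  have "measure (PiM I D) A = measure (distr M (PiM I (\<lambda>_. borel)) Y) A" by (simp add: deq)
  also have "\<dots> = measure M (Y -` A \<inter> space M)" by (rule measure_distr[OF Ym Am'])
  also have "Y -` A \<inter> space M = {\<omega> \<in> space M.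
            Max ((\<lambda>i. E i \<omega>) ` {1..k}) - Min ((\<lambda>i. E i \<omega>) ` {1..k}) \<le> tbar}"
  proof -
    have "\<And>\<omega>. \<omega> \<in> space M \<Longrightarrow> Y \<omega> \<in> space (PiM I D)"
      unfolding Y_def by (auto simp: space_PiM D_def)
    moreover have "\<And>\<omega>. (\<lambda>i. Y \<omega> i) ` I = (\<lambda>i. E i \<omega>) ` I" unfolding Y_def by auto
    ultimately show ?thesis unfolding A_def I_def by auto
  qed
  finally have "measure M {\<omega> \<in> space M.
            Max ((\<lambda>i. E i \<omega>) ` {1..k}) - Min ((\<lambda>i. E i \<omega>) ` {1..k}) \<le> tbar} = measure (PiM I D) A" ..
  also have "\<dots> = (\<Sum>i\<in>I. \<beta> i / (\<Sum>j\<in>I. \<beta> j) * (\<Prod>j\<in>I-{i}. 1 - exp (- \<beta> j * tbar)))"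
    unfolding measure_def A_def D_def
    using main_PM(2)[OF fin ne pos assms(4)] pos assms(4)
    by (simp add: less_imp_le mult_pos_pos sum_nonneg prod_nonneg)
  also have "\<dots> = (\<Sum>i=1..k. \<alpha> i / (\<Sum>j=1..k. \<alpha> j) *
              (\<Prod>j\<in>{1..k} - {i}. 1 - exp (- \<alpha> j * tbar)))"
    unfolding I_def \<beta>_def by (intro sum.cong refl arg_cong2[where f="(*)"] prod.cong arg_cong2[where f="(/)"] sum.cong) auto
  finally show ?thesis .
qed

end
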